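(* Let $\Gamma\subsetneqq\mathbb{R}^n$ be an open convex cone with vertex at the origin such that $\{\lambda:\lambda_i>0\ \forall i\}\subset\Gamma\subset\{\lambda:\sum_i\lambda_i>0\}$, and let $f$ be a smooth symmetric function on $\Gamma$ with $\frac{\partial f}{\partial\lambda_i}>0$ in $\Gamma$ for all $i$ and $\limsup_{\lambda\to\lambda_0}f(\lambda)<1$ for every $\lambda_0\in\partial\Gamma$. Let $A=\mathrm{diag}(a_1,\dots,a_n)\in\mathcal{A}$ with $0<a_1\leq\cdots\leq a_n$. Then there is a unique monotone decreasing smooth function $g$ defined on $[1,+\infty)$ such that, for all $w\in[1,+\infty)$, $(g(w),a_2w,\dots,a_nw)\in\Gamma$ and $$f(g(w),a_2w,\dots,a_nw)=1.$$
   Context: $S^+(n)$ is the set of real symmetric positive definite $n\times n$ matrices; for $A\in S^+(n)$, $a=\lambda(A)$ denotes its eigenvalues, $\hat a=\max_ia_i$, $\hat f_\lambda(a)=\max_i\frac{\partial f}{\partial\lambda_i}(a)$, and $\mathcal{A}:=\{A\in S^+(n): f(a)=1,\ \frac{\nabla f(a)\cdot a}{2\hat a\hat f_\lambda(a)}>1\}$. *)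

theory Defs
  imports "HOL-Analysis.Analysis"
begin

definition pd :: "'n::finite \<Rightarrow> (real^'n \<Rightarrow> real) \<Rightarrow> real^'n \<Rightarrow> real" where
  "pd i f x = deriv (\<lambda>t. f (x + t *\<^sub>R axis i 1)) 0"

fun iter_pd :: "'n::finite list \<Rightarrow> (real^'n \<Rightarrow> real) \<Rightarrow> real^'n \<Rightarrow> real" where
  "iter_pd [] f = f"
| "iter_pd (i # is) f = pd i (iter_pd is f)"

definition smooth_on_vec :: "(real^'n::finite) set \<Rightarrow> (real^'n \<Rightarrow> real) \<Rightarrow> bool" where
  "smooth_on_vec S f \<longleftrightarrow>
     (\<forall>is. continuous_on S (iter_pd is f) \<and>
        (\<forall>i. \<forall>x\<in>S. (\<lambda>t. iter_pd is f (x + t *\<^sub>R axis i 1)) differentiable (at 0)))"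

text \<open>g is smooth on the (possibly closed) set T of reals: it has derivatives of all orders
  on T (one-sided at boundary points, via derivatives within T).\<close>
definition smooth_on_real :: "real set \<Rightarrow> (real \<Rightarrow> real) \<Rightarrow> bool" where
  "smooth_on_real T g \<longleftrightarrow>
     (\<exists>D. D 0 = g \<and> (\<forall>k. \<forall>x\<in>T. (D k has_real_derivative D (Suc k) x) (at x within T)))"

text \<open>The first index lambda_1 (index type carries the order 1 < 2 < ... < n).\<close>
definition first_idx :: "'n::{finite,wellorder}" where
  "first_idx = (LEAST i. True)"

definition curve_pt :: "(real \<Rightarrow> real) \<Rightarrow> (real,'n::{finite,wellorder}) vec \<Rightarrow> real \<Rightarrow> (real,'n) vec" where
  "curve_pt g a w = (\<chi> i. if i = first_idx then g w else a $ i * w)"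

text \<open>Membership of diag(a) in the class \<A> (in terms of its eigenvalue vector a).\<close>
definition in_class_A :: "(real^'n::finite \<Rightarrow> real) \<Rightarrow> real^'n \<Rightarrow> bool" where
  "in_class_A f a \<longleftrightarrow> (\<forall>i. 0 < a $ i) \<and> f a = 1 \<and>
     (\<Sum>i\<in>UNIV. pd i f a * a $ i) /
       (2 * Max (range (\<lambda>i. a $ i)) * Max (range (\<lambda>i. pd i f a))) > 1"

end

theory Submission
  imports Defs
begin


lemma deriv_bound_1d:
  fixes \<psi> :: "real \<Rightarrow> real"
  assumes d: "\<And>s. \<bar>s\<bar> \<le> \<bar>t\<bar> \<Longrightarrow> (\<psi> has_real_derivative \<psi>' s) (at s)"
    and b: "\<And>s. \<bar>s\<bar> \<le> \<bar>t\<bar> \<Longrightarrow> \<bar>\<psi>' s\<bar> \<le> B"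
  shows "\<bar>\<psi> t - \<psi> 0\<bar> \<le> B * \<bar>t\<bar>"
proof (cases t "0::real" rule: linorder_cases)
  case less
  then obtain z where z: "t < z" "z < 0" "\<psi> 0 - \<psi> t = (0 - t) * \<psi>' z"
    using MVT2[of t 0 \<psi> \<psi>'] d by auto
  have "\<bar>\<psi>' z\<bar> \<le> B" using b z by auto
  then show ?thesis using z less by (simp add: abs_mult abs_minus_commute mult.commute)
next
  case equal then show ?thesis by simp
next
  case greater
  then obtain z where z: "0 < z" "z < t" "\<psi> t - \<psi> 0 = (t - 0) * \<psi>' z"
    using MVT2[of 0 t \<psi> \<psi>'] d by auto
  have "\<bar>\<psi>' z\<bar> \<le> B" using b z by auto
  then show ?thesis using z greater by (simp add: abs_mult mult.commute)
qed

definition proj :: "'n set \<Rightarrow> real^'n::finite \<Rightarrow> real^'n" where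
  "proj I h = (\<chi> i. if i \<in> I then h $ i else 0)"

lemma partials_frechet:
  fixes \<phi> :: "real^'n::finite \<Rightarrow> real" and D :: "'n \<Rightarrow> real^'n \<Rightarrow> real"
  assumes S: "open S" "x \<in> S"
    and der: "\<And>i y. y \<in> S \<Longrightarrow> ((\<lambda>t. \<phi> (y + t *\<^sub>R axis i 1)) has_real_derivative D i y) (at 0)"
    and cont: "\<And>i. continuous_on S (D i)"
  shows "(\<phi> has_derivative (\<lambda>h. \<Sum>i\<in>UNIV. D i x * h $ i)) (at x)"
  unfolding has_derivative_at_alt
proof (intro conjI allI impI)
  show "bounded_linear (\<lambda>h. \<Sum>i\<in>UNIV. D i x * h $ i)"
    by (intro bounded_linear_sum bounded_linear_compose[OF bounded_linear_mult_right bounded_linear_vec_nth])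
next
  fix e :: real assume e: "0 < e"
  define e' where "e' = e / real CARD('n)"
  have e': "0 < e'" using e by (simp add: e'_def)
  have ev: "\<forall>\<^sub>F y in nhds x. y \<in> S \<and> (\<forall>i. \<bar>D i y - D i x\<bar> < e')"
  proof (intro eventually_conj eventually_all_finite)
    show "\<forall>\<^sub>F y in nhds x. y \<in> S" using S eventually_nhds_in_open by blast
    fix i
    have "isCont (D i) x" using cont S continuous_on_eq_continuous_at by blast
    then have "(D i \<longlongrightarrow> D i x) (nhds x)"
      by (simp add: isCont_def tendsto_at_iff_tendsto_nhds)
    then show "\<forall>\<^sub>F y in nhds x. \<bar>D i y - D i x\<bar> < e'"
      using e' by (auto simp: tendsto_iff dist_real_def)
  qed
  then obtain d where d: "d > 0" "\<And>y. dist y x < d \<Longrightarrow> y \<in> S \<and> (\<forall>i. \<bar>D i y - D i x\<bar> < e')"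
    unfolding eventually_nhds_metric by blast
  have main: "\<forall>h. norm h < d \<longrightarrow>
     \<bar>\<phi> (x + proj I h) - \<phi> x - (\<Sum>i\<in>I. D i x * h $ i)\<bar> \<le> e' * (\<Sum>i\<in>I. \<bar>h $ i\<bar>)" for I
  proof -
    have "finite I" by simp
    then show ?thesis
    proof (induction I rule: finite_induct)
      case empty
      have "(\<chi> i. (0::real)) = (0::real^'n)" by (simp add: vec_eq_iff)
      then show ?case by (simp add: proj_def)
    next
      case (insert j I)
      show ?case
      proof (intro allI impI)
        fix h :: "real^'n" assume h: "norm h < d"
        define y where "y = x + proj I h"
        have yj: "x + proj (insert j I) h = y + h $ j *\<^sub>R axis j 1"
          using insert(2) by (auto simp: y_def proj_def vec_eq_iff axis_def)
        define \<psi> where "\<psi> t = \<phi> (y + t *\<^sub>R axis j 1) - t * D j x" for t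
        have pts: "dist (y + s *\<^sub>R axis j 1) x < d \<and> y + s *\<^sub>R axis j 1 \<in> S"
          if "\<bar>s\<bar> \<le> \<bar>h $ j\<bar>" for s
        proof -
          have "norm (y + s *\<^sub>R axis j 1 - x) \<le> norm h"
          proof (rule norm_le_componentwise_cart)
            fix i show "norm ((y + s *\<^sub>R axis j 1 - x) $ i) \<le> norm (h $ i)"
              using that insert(2) by (auto simp: y_def proj_def axis_def)
          qed
          then show ?thesis using h d(2) by (simp add: dist_norm)
        qed
        have dpsi: "(\<psi> has_real_derivative (D j (y + s *\<^sub>R axis j 1) - D j x)) (at s)"
          if "\<bar>s\<bar> \<le> \<bar>h $ j\<bar>" for s
        proof -
          have "((\<lambda>t. \<phi> (y + s *\<^sub>R axis j 1 + t *\<^sub>R axis j 1)) has_real_derivative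
                 D j (y + s *\<^sub>R axis j 1)) (at 0)"
            using der pts[OF that] by blast
          then have "((\<lambda>t. \<phi> (y + (t + s) *\<^sub>R axis j 1)) has_real_derivative
                 D j (y + s *\<^sub>R axis j 1)) (at 0)"
            by (simp add: scaleR_add_left algebra_simps)
          then have "((\<lambda>t. \<phi> (y + t *\<^sub>R axis j 1)) has_real_derivative
                 D j (y + s *\<^sub>R axis j 1)) (at (0 + s))"
            by (subst DERIV_shift) simp
          then show ?thesis unfolding \<psi>_def
            by (auto intro!: derivative_eq_intros)
        qed
        have b: "\<bar>\<psi> (h $ j) - \<psi> 0\<bar> \<le> e' * \<bar>h $ j\<bar>"
          by (rule deriv_bound_1d[OF dpsi]) (use pts d(2) in \<open>auto simp: less_imp_le\<close>)
        have ih: "\<bar>\<phi> y - \<phi> x - (\<Sum>i\<in>I. D i x * h $ i)\<bar> \<le> e' * (\<Sum>i\<in>I. \<bar>h $ i\<bar>)"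
          using insert(3) h y_def by blast
        show "\<bar>\<phi> (x + proj (insert j I) h) - \<phi> x - (\<Sum>i\<in>insert j I. D i x * h $ i)\<bar>
              \<le> e' * (\<Sum>i\<in>insert j I. \<bar>h $ i\<bar>)"
          using b ih insert(1,2) unfolding yj \<psi>_def
          by (simp add: algebra_simps)
      qed
    qed
  qed
  show "\<exists>d>0. \<forall>y. norm (y - x) < d \<longrightarrow>
      norm (\<phi> y - \<phi> x - (\<Sum>i\<in>UNIV. D i x * (y - x) $ i)) \<le> e * norm (y - x)"
  proof (intro exI[of _ d] conjI allI impI)
    fix y assume y: "norm (y - x) < d"
    have pu: "x + proj UNIV (y - x) = y" by (simp add: proj_def vec_eq_iff)
    have "norm (\<phi> y - \<phi> x - (\<Sum>i\<in>UNIV. D i x * (y - x) $ i)) \<le> e' * (\<Sum>i\<in>UNIV. \<bar>(y - x) $ i\<bar>)"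
      using main[of UNIV] y pu by auto
    also have "\<dots> \<le> e' * (\<Sum>i::'n\<in>UNIV. norm (y - x))"
    proof (rule mult_left_mono)
      show "(\<Sum>i\<in>UNIV. \<bar>(y - x) $ i\<bar>) \<le> (\<Sum>i::'n\<in>UNIV. norm (y - x))"
        by (rule sum_mono) (rule component_le_norm_cart)
    qed (use e' in auto)
    also have "\<dots> = e * norm (y - x)" by (simp add: e'_def)
    finally show "norm (\<phi> y - \<phi> x - (\<Sum>i\<in>UNIV. D i x * (y - x) $ i)) \<le> e * norm (y - x)" .
  qed (use d in auto)
qed


coinductive smv :: "(real^'n::finite) set \<Rightarrow> (real^'n \<Rightarrow> real) \<Rightarrow> bool" for G where
  "(\<forall>x\<in>G. (\<phi> has_derivative (\<lambda>h. \<Sum>i\<in>UNIV. pd i \<phi> x * h $ i)) (at x)) \<Longrightarrow>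
   (\<forall>i. smv G (pd i \<phi>)) \<Longrightarrow> smv G \<phi>"

lemma smooth_smv:
  assumes G: "open G" and sm: "smooth_on_vec G f"
  shows "smv G (iter_pd js f)"
proof -
  have "\<exists>js. \<phi> = iter_pd js f \<Longrightarrow> smv G \<phi>" for \<phi>
  proof (coinduction arbitrary: \<phi> rule: smv.coinduct)
    case (smv \<phi>)
    then obtain js where js: "\<phi> = iter_pd js f" by blast
    have "(\<phi> has_derivative (\<lambda>h. \<Sum>i\<in>UNIV. pd i \<phi> x * h $ i)) (at x)" if x: "x \<in> G" for x
    proof (rule partials_frechet[OF G x])
      fix i y assume y: "y \<in> G"
      have "(\<lambda>t. iter_pd js f (y + t *\<^sub>R axis i 1)) differentiable (at 0)"
        using sm y unfolding smooth_on_vec_def by blast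
      then show "((\<lambda>t. \<phi> (y + t *\<^sub>R axis i 1)) has_real_derivative pd i \<phi> y) (at 0)"
        unfolding js pd_def by (simp add: DERIV_deriv_iff_real_differentiable)
    next
      fix i
      have "continuous_on G (iter_pd (i # js) f)"
        using sm unfolding smooth_on_vec_def by blast
      then show "continuous_on G (pd i \<phi>)" using js by simp
    qed
    moreover have "\<exists>js'. pd i \<phi> = iter_pd js' f" for i
      using js by (intro exI[of _ "i # js"]) simp
    ultimately show ?case by blast
  qed
  then show ?thesis by blast
qed


coinductive sm :: "(real \<times> real) set \<Rightarrow> (real \<times> real \<Rightarrow> real) \<Rightarrow> bool" for U where
  "(\<forall>z\<in>U. (\<Phi> has_derivative (\<lambda>h. \<Phi>s z * fst h + \<Phi>w z * snd h)) (at z)) \<Longrightarrow>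
   sm U \<Phi>s \<Longrightarrow> sm U \<Phi>w \<Longrightarrow> sm U \<Phi>"

inductive alg :: "(real \<times> real) set \<Rightarrow> (real \<times> real \<Rightarrow> real) set \<Rightarrow> (real \<times> real \<Rightarrow> real) \<Rightarrow> bool"
  for U B where
  base: "\<Phi> \<in> B \<Longrightarrow> alg U B \<Phi>"
| const: "alg U B (\<lambda>z. c)"
| add: "alg U B \<Phi> \<Longrightarrow> alg U B \<Psi> \<Longrightarrow> alg U B (\<lambda>z. \<Phi> z + \<Psi> z)"
| mult: "alg U B \<Phi> \<Longrightarrow> alg U B \<Psi> \<Longrightarrow> alg U B (\<lambda>z. \<Phi> z * \<Psi> z)"
| inv: "alg U B \<Phi> \<Longrightarrow> (\<forall>z\<in>U. \<Phi> z \<noteq> 0) \<Longrightarrow> alg U B (\<lambda>z. inverse (\<Phi> z))"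

lemma alg_sum: "finite I \<Longrightarrow> (\<And>i. i \<in> I \<Longrightarrow> alg U B (F i)) \<Longrightarrow> alg U B (\<lambda>z. \<Sum>i\<in>I. F i z)"
proof (induction I rule: finite_induct)
  case empty then show ?case using alg.const[of U B 0] by simp
next
  case (insert x F) then show ?case by (simp add: alg.add)
qed

lemma alg_step:
  assumes B: "\<And>\<Phi>. \<Phi> \<in> B \<Longrightarrow> \<exists>\<Phi>s \<Phi>w. alg U B \<Phi>s \<and> alg U B \<Phi>w \<and>
              (\<forall>z\<in>U. (\<Phi> has_derivative (\<lambda>h. \<Phi>s z * fst h + \<Phi>w z * snd h)) (at z))"
  shows "alg U B \<Phi> \<Longrightarrow> \<exists>\<Phi>s \<Phi>w. alg U B \<Phi>s \<and> alg U B \<Phi>w \<and>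
              (\<forall>z\<in>U. (\<Phi> has_derivative (\<lambda>h. \<Phi>s z * fst h + \<Phi>w z * snd h)) (at z))"
proof (induction rule: alg.induct)
  case (base \<Phi>) then show ?case using B by blast
next
  case (const c)
  then show ?case
  proof (intro exI[of _ "\<lambda>z. 0"] conjI alg.const ballI)
    fix z
    show "((\<lambda>z. c) has_derivative (\<lambda>h. 0 * fst h + 0 * snd h)) (at z)"
      by (rule has_derivative_eq_rhs[OF has_derivative_const]) (simp add: fun_eq_iff)
  qed
next
  case (add \<Phi> \<Psi>)
  then obtain \<Phi>s \<Phi>w \<Psi>s \<Psi>w where
    a: "alg U B \<Phi>s" "alg U B \<Phi>w" "\<forall>z\<in>U. (\<Phi> has_derivative (\<lambda>h. \<Phi>s z * fst h + \<Phi>w z * snd h)) (at z)"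
    and b: "alg U B \<Psi>s" "alg U B \<Psi>w" "\<forall>z\<in>U. (\<Psi> has_derivative (\<lambda>h. \<Psi>s z * fst h + \<Psi>w z * snd h)) (at z)"
    by blast
  have d: "((\<lambda>z. \<Phi> z + \<Psi> z) has_derivative (\<lambda>h. (\<Phi>s z + \<Psi>s z) * fst h + (\<Phi>w z + \<Psi>w z) * snd h)) (at z)"
    if z: "z \<in> U" for z
    by (rule has_derivative_eq_rhs[OF has_derivative_add[OF a(3)[rule_format, OF z] b(3)[rule_format, OF z]]])
      (simp add: fun_eq_iff algebra_simps)
  show ?case
    apply (rule exI[of _ "\<lambda>z. \<Phi>s z + \<Psi>s z"])
    apply (rule exI[of _ "\<lambda>z. \<Phi>w z + \<Psi>w z"])
    using d alg.add[OF a(1) b(1)] alg.add[OF a(2) b(2)] by blast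
next
  case (mult \<Phi> \<Psi>)
  then obtain \<Phi>s \<Phi>w \<Psi>s \<Psi>w where
    a: "alg U B \<Phi>s" "alg U B \<Phi>w" "\<forall>z\<in>U. (\<Phi> has_derivative (\<lambda>h. \<Phi>s z * fst h + \<Phi>w z * snd h)) (at z)"
    and b: "alg U B \<Psi>s" "alg U B \<Psi>w" "\<forall>z\<in>U. (\<Psi> has_derivative (\<lambda>h. \<Psi>s z * fst h + \<Psi>w z * snd h)) (at z)"
    by blast
  have d: "((\<lambda>z. \<Phi> z * \<Psi> z) has_derivative
       (\<lambda>h. (\<Phi>s z * \<Psi> z + \<Phi> z * \<Psi>s z) * fst h + (\<Phi>w z * \<Psi> z + \<Phi> z * \<Psi>w z) * snd h)) (at z)"
    if z: "z \<in> U" for z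
    by (rule has_derivative_eq_rhs[OF has_derivative_mult[OF a(3)[rule_format, OF z] b(3)[rule_format, OF z]]])
      (simp add: fun_eq_iff algebra_simps)
  show ?case
    apply (rule exI[of _ "\<lambda>z. \<Phi>s z * \<Psi> z + \<Phi> z * \<Psi>s z"])
    apply (rule exI[of _ "\<lambda>z. \<Phi>w z * \<Psi> z + \<Phi> z * \<Psi>w z"])
    using d alg.add[OF alg.mult[OF a(1) mult.hyps(2)] alg.mult[OF mult.hyps(1) b(1)]]
      alg.add[OF alg.mult[OF a(2) mult.hyps(2)] alg.mult[OF mult.hyps(1) b(2)]] by blast
next
  case (inv \<Phi>)
  then obtain \<Phi>s \<Phi>w where
    a: "alg U B \<Phi>s" "alg U B \<Phi>w" "\<forall>z\<in>U. (\<Phi> has_derivative (\<lambda>h. \<Phi>s z * fst h + \<Phi>w z * snd h)) (at z)"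
    by blast
  have ai: "alg U B (\<lambda>z. inverse (\<Phi> z))" using inv.hyps by (rule alg.inv)
  have am: "alg U B (\<lambda>z. - 1 * (X z * inverse (\<Phi> z) * inverse (\<Phi> z)))" if "alg U B X" for X
    by (intro alg.mult alg.const that ai)
  have d: "((\<lambda>z. inverse (\<Phi> z)) has_derivative
       (\<lambda>h. - 1 * (\<Phi>s z * inverse (\<Phi> z) * inverse (\<Phi> z)) * fst h +
            - 1 * (\<Phi>w z * inverse (\<Phi> z) * inverse (\<Phi> z)) * snd h)) (at z)"
    if z: "z \<in> U" for z
    by (rule has_derivative_eq_rhs[OF Deriv.has_derivative_inverse[OF _ a(3)[rule_format, OF z]]])
      (use inv.hyps z in \<open>auto simp: fun_eq_iff algebra_simps\<close>)
  show ?case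
    apply (rule exI[of _ "\<lambda>z. - 1 * (\<Phi>s z * inverse (\<Phi> z) * inverse (\<Phi> z))"])
    apply (rule exI[of _ "\<lambda>z. - 1 * (\<Phi>w z * inverse (\<Phi> z) * inverse (\<Phi> z))"])
    using d am[OF a(1)] am[OF a(2)] by blast
qed

lemma alg_sm:
  assumes B: "\<And>\<Phi>. \<Phi> \<in> B \<Longrightarrow> \<exists>\<Phi>s \<Phi>w. alg U B \<Phi>s \<and> alg U B \<Phi>w \<and>
              (\<forall>z\<in>U. (\<Phi> has_derivative (\<lambda>h. \<Phi>s z * fst h + \<Phi>w z * snd h)) (at z))"
    and a: "alg U B \<Phi>"
  shows "sm U \<Phi>"
  using a
proof (coinduction arbitrary: \<Phi> rule: sm.coinduct)
  case (sm \<Phi>)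
  obtain \<Phi>s \<Phi>w where "alg U B \<Phi>s" "alg U B \<Phi>w"
     "\<forall>z\<in>U. (\<Phi> has_derivative (\<lambda>h. \<Phi>s z * fst h + \<Phi>w z * snd h)) (at z)"
    using alg_step[OF B sm] by blast
  then show ?case by auto
qed

lemma alg_sm_self: "alg U (Collect (sm U)) \<Phi> \<Longrightarrow> sm U \<Phi>"
proof (rule alg_sm)
  fix \<Phi> assume "\<Phi> \<in> Collect (sm U)"
  then have "sm U \<Phi>" by simp
  then show "\<exists>\<Phi>s \<Phi>w. alg U (Collect (sm U)) \<Phi>s \<and> alg U (Collect (sm U)) \<Phi>w \<and>
              (\<forall>z\<in>U. (\<Phi> has_derivative (\<lambda>h. \<Phi>s z * fst h + \<Phi>w z * snd h)) (at z))"
  proof (cases rule: sm.cases)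
    case (1 \<Phi>s \<Phi>w)
    then show ?thesis by (intro exI[of _ \<Phi>s] exI[of _ \<Phi>w]) (auto intro: alg.base)
  qed
qed

definition cmp :: "real^'n::finite \<Rightarrow> real^'n \<Rightarrow> (real^'n \<Rightarrow> real) \<Rightarrow> real \<times> real \<Rightarrow> real" where
  "cmp e b \<phi> = (\<lambda>z. \<phi> (fst z *\<^sub>R e + snd z *\<^sub>R b))"

lemma cmp_deriv:
  assumes "smv G \<phi>" "z \<in> {z. fst z *\<^sub>R e + snd z *\<^sub>R b \<in> G}"
  shows "(cmp e b \<phi> has_derivative (\<lambda>h. (\<Sum>i\<in>UNIV. e $ i * cmp e b (pd i \<phi>) z) * fst h
            + (\<Sum>i\<in>UNIV. b $ i * cmp e b (pd i \<phi>) z) * snd h)) (at z)"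
proof -
  have d\<phi>: "(\<phi> has_derivative (\<lambda>h. \<Sum>i\<in>UNIV. pd i \<phi> (fst z *\<^sub>R e + snd z *\<^sub>R b) * h $ i))
      (at (fst z *\<^sub>R e + snd z *\<^sub>R b))"
    using assms(1) by (cases rule: smv.cases) (use assms(2) in auto)
  have dl: "((\<lambda>z. fst z *\<^sub>R e + snd z *\<^sub>R b) has_derivative (\<lambda>h. fst h *\<^sub>R e + snd h *\<^sub>R b)) (at z)"
    by (auto intro!: derivative_eq_intros)
  show ?thesis
    unfolding cmp_def
    by (rule has_derivative_eq_rhs[OF has_derivative_compose[OF dl d\<phi>]])
      (simp add: fun_eq_iff cmp_def sum_distrib_right sum_distrib_left sum.distrib distrib_left mult_ac)
qed

lemma cmp_sm:
  assumes "smv G \<phi>"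
  shows "sm {z. fst z *\<^sub>R e + snd z *\<^sub>R b \<in> G} (cmp e b \<phi>)"
proof -
  let ?U = "{z. fst z *\<^sub>R e + snd z *\<^sub>R b \<in> G}"
  let ?B = "{cmp e b \<psi> | \<psi>. smv G \<psi>}"
  show ?thesis
  proof (rule alg_sm[of ?B])
    fix \<Phi> assume "\<Phi> \<in> ?B"
    then obtain \<psi> where \<psi>: "\<Phi> = cmp e b \<psi>" "smv G \<psi>" by blast
    have pd: "smv G (pd i \<psi>)" for i using \<psi>(2) by (cases rule: smv.cases) auto
    have "alg ?U ?B (\<lambda>z. \<Sum>i\<in>UNIV. c i * cmp e b (pd i \<psi>) z)" for c
      by (intro alg_sum alg.mult alg.const alg.base) (use pd in auto)
    then show "\<exists>\<Phi>s \<Phi>w. alg ?U ?B \<Phi>s \<and> alg ?U ?B \<Phi>w \<and>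
              (\<forall>z\<in>?U. (\<Phi> has_derivative (\<lambda>h. \<Phi>s z * fst h + \<Phi>w z * snd h)) (at z))"
      using cmp_deriv[OF \<psi>(2)] \<psi>(1) by blast
  next
    show "alg ?U ?B (cmp e b \<phi>)" using assms by (auto intro: alg.base)
  qed
qed



definition ee :: "real^'n::{finite,wellorder}" where "ee = axis first_idx 1"
definition bb :: "(real,'n::{finite,wellorder}) vec \<Rightarrow> (real,'n) vec" where
  "bb a = (\<chi> i. if i = first_idx then 0 else a $ i)"

lemma curve_eq: "curve_pt g a w = g w *\<^sub>R ee + w *\<^sub>R bb a"
  by (simp add: curve_pt_def ee_def bb_def vec_eq_iff axis_def)

lemma a_eq: "a = (a $ first_idx) *\<^sub>R ee + 1 *\<^sub>R bb a"
  by (simp add: ee_def bb_def vec_eq_iff axis_def)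

lemma ee_comp: "ee $ i = (if i = first_idx then 1 else 0)"
  by (simp add: ee_def axis_def)

lemma norm_ee: "norm (ee :: real^'n::{finite,wellorder}) = 1"
  by (simp add: ee_def)

lemma implicit_arith:
  fixes A C ds dw N \<eta> \<epsilon> K :: real
  assumes A: "A > 0" and eta: "\<eta> > 0" and N: "N \<le> \<bar>ds\<bar> + \<bar>dw\<bar>" and e0: "0 \<le> \<epsilon>"
    and F: "\<bar>A * ds + C * dw\<bar> \<le> \<epsilon> * N" and e1: "\<epsilon> \<le> A / 2"
    and e2: "\<epsilon> \<le> \<eta> * A / (K + 1)" and K: "K = (2 * \<bar>C\<bar> + A) / A"
  shows "\<bar>ds + (C / A) * dw\<bar> \<le> \<eta> * \<bar>dw\<bar>"
proof -
  have "K = 1 + 2 * \<bar>C\<bar> / A" using A K by (simp add: field_simps)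
  moreover have "0 \<le> 2 * \<bar>C\<bar> / A" using A by simp
  ultimately have K0: "K \<ge> 1" by linarith
  have h1: "A * \<bar>ds\<bar> \<le> \<bar>A * ds + C * dw\<bar> + \<bar>C\<bar> * \<bar>dw\<bar>"
  proof -
    have "A * \<bar>ds\<bar> = \<bar>(A * ds + C * dw) - C * dw\<bar>" using A by (simp add: abs_mult)
    also have "\<dots> \<le> \<bar>A * ds + C * dw\<bar> + \<bar>C * dw\<bar>" by (rule abs_triangle_ineq4)
    finally show ?thesis by (simp add: abs_mult)
  qed
  have h2: "\<epsilon> * N \<le> \<epsilon> * (\<bar>ds\<bar> + \<bar>dw\<bar>)" using N e0 by (simp add: mult_left_mono)
  have h3: "\<epsilon> * (\<bar>ds\<bar> + \<bar>dw\<bar>) \<le> A / 2 * (\<bar>ds\<bar> + \<bar>dw\<bar>)" using e1 by (intro mult_right_mono) auto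
  have "A * \<bar>ds\<bar> \<le> A / 2 * (\<bar>ds\<bar> + \<bar>dw\<bar>) + \<bar>C\<bar> * \<bar>dw\<bar>" using h1 h2 h3 F by linarith
  moreover have "A / 2 * (\<bar>ds\<bar> + \<bar>dw\<bar>) = (A * \<bar>ds\<bar>) / 2 + (A * \<bar>dw\<bar>) / 2" by (simp add: algebra_simps)
  ultimately have "A * \<bar>ds\<bar> \<le> A * \<bar>dw\<bar> + 2 * (\<bar>C\<bar> * \<bar>dw\<bar>)" by linarith
  moreover have "(2 * \<bar>C\<bar> + A) * \<bar>dw\<bar> = A * \<bar>dw\<bar> + 2 * (\<bar>C\<bar> * \<bar>dw\<bar>)" by (simp add: algebra_simps)
  ultimately have "A * \<bar>ds\<bar> \<le> (2 * \<bar>C\<bar> + A) * \<bar>dw\<bar>" by linarith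
  moreover have "2 * \<bar>C\<bar> + A = A * K" using A K by simp
  ultimately have "A * \<bar>ds\<bar> \<le> A * (K * \<bar>dw\<bar>)" by (simp add: mult.assoc)
  then have dsK: "\<bar>ds\<bar> \<le> K * \<bar>dw\<bar>" using A by (rule mult_left_le_imp_le)
  have "\<bar>A * ds + C * dw\<bar> \<le> \<epsilon> * (K * \<bar>dw\<bar> + \<bar>dw\<bar>)"
    using F h2 dsK e0 by (smt (verit) mult_left_mono)
  also have "\<dots> = \<epsilon> * (K + 1) * \<bar>dw\<bar>" by (simp add: algebra_simps)
  also have "\<dots> \<le> (\<eta> * A / (K + 1)) * (K + 1) * \<bar>dw\<bar>"
    using e2 K0 by (intro mult_right_mono) auto
  also have "\<dots> = \<eta> * A * \<bar>dw\<bar>" using K0 by simp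
  finally have "\<bar>A * ds + C * dw\<bar> \<le> \<eta> * A * \<bar>dw\<bar>" .
  moreover have "\<bar>ds + (C / A) * dw\<bar> = \<bar>A * ds + C * dw\<bar> / A"
    using A by (simp add: field_simps)
  ultimately show ?thesis using A by (simp add: field_simps)
qed

definition gsol :: "(real,'n::{finite,wellorder}) vec set \<Rightarrow> ((real,'n) vec \<Rightarrow> real) \<Rightarrow> (real,'n) vec \<Rightarrow> real \<Rightarrow> real" where
  "gsol G f a w = (THE s. s *\<^sub>R ee + w *\<^sub>R bb a \<in> G \<and> f (s *\<^sub>R ee + w *\<^sub>R bb a) = 1)"

definition FsF :: "((real,'n::{finite,wellorder}) vec \<Rightarrow> real) \<Rightarrow> (real,'n) vec \<Rightarrow> real \<times> real \<Rightarrow> real" where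
  "FsF f a z = (\<Sum>i\<in>UNIV. ee $ i * cmp ee (bb a) (pd i f) z)"
definition FwF :: "((real,'n::{finite,wellorder}) vec \<Rightarrow> real) \<Rightarrow> (real,'n) vec \<Rightarrow> real \<times> real \<Rightarrow> real" where
  "FwF f a z = (\<Sum>i\<in>UNIV. bb a $ i * cmp ee (bb a) (pd i f) z)"

lemma sum_ee: "(\<Sum>i\<in>UNIV. ee $ i * X i) = X first_idx"
proof -
  have "(\<Sum>i\<in>UNIV. ee $ i * X i) = (\<Sum>i\<in>UNIV. if i = first_idx then X i else 0)"
    by (rule sum.cong) (auto simp: ee_comp)
  then show ?thesis by simp
qed

locale L23 =
  fixes \<Gamma> :: "(real,'n::{finite,wellorder}) vec set"
    and f :: "(real,'n) vec \<Rightarrow> real"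
    and a :: "(real,'n) vec"
  assumes op: "open \<Gamma>" and cvx: "convex \<Gamma>"
    and pos: "{x. \<forall>i. 0 < x $ i} \<subseteq> \<Gamma>"
    and half: "\<Gamma> \<subseteq> {x. 0 < (\<Sum>i\<in>UNIV. x $ i)}"
    and fsm: "smooth_on_vec \<Gamma> f"
    and incr: "\<And>i x. x \<in> \<Gamma> \<Longrightarrow> 0 < pd i f x"
    and bdry: "\<And>l. l \<in> frontier \<Gamma> \<Longrightarrow> Limsup (at l within \<Gamma>) (\<lambda>x. ereal (f x)) < 1"
    and fa: "f a = 1"
    and apos: "\<And>i. 0 < a $ i"
begin

lemma smv_f: "smv \<Gamma> f"
  using smooth_smv[OF op fsm, of "[]"] by simp

lemma f_deriv: "x \<in> \<Gamma> \<Longrightarrow> (f has_derivative (\<lambda>h. \<Sum>i\<in>UNIV. pd i f x * h $ i)) (at x)"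
  using smv_f by (cases rule: smv.cases) auto

lemma f_cont: "continuous_on \<Gamma> f"
  using f_deriv has_derivative_continuous continuous_at_imp_continuous_on by blast

lemma f_mono_gen:
  assumes x: "x \<in> \<Gamma>" and xd: "x + d \<in> \<Gamma>" and d: "\<And>i. 0 \<le> d $ i"
  shows "f x \<le> f (x + d) \<and> ((\<exists>i. 0 < d $ i) \<longrightarrow> f x < f (x + d))"
proof -
  define D where "D t = (\<Sum>i\<in>UNIV. pd i f (x + t *\<^sub>R d) * d $ i)" for t
  have inG: "x + t *\<^sub>R d \<in> \<Gamma>" if "0 \<le> t" "t \<le> 1" for t
  proof -
    have "(1 - t) *\<^sub>R x + t *\<^sub>R (x + d) \<in> \<Gamma>"
      using convexD[OF cvx x xd, of "1 - t" t] that by auto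
    moreover have "(1 - t) *\<^sub>R x + t *\<^sub>R (x + d) = x + t *\<^sub>R d"
      by (simp add: algebra_simps)
    ultimately show ?thesis by simp
  qed
  have der: "((\<lambda>t. f (x + t *\<^sub>R d)) has_real_derivative D t) (at t)" if "0 \<le> t" "t \<le> 1" for t
  proof -
    have dl: "((\<lambda>t. x + t *\<^sub>R d) has_derivative (\<lambda>h. h *\<^sub>R d)) (at t)"
      by (auto intro!: derivative_eq_intros)
    show ?thesis
      unfolding has_field_derivative_def
      by (rule has_derivative_eq_rhs[OF has_derivative_compose[OF dl f_deriv[OF inG[OF that]]]])
        (simp add: D_def fun_eq_iff sum_distrib_left mult_ac)
  qed
  obtain z where z: "0 < z" "z < 1" "f (x + 1 *\<^sub>R d) - f (x + 0 *\<^sub>R d) = (1 - 0) * D z"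
    using MVT2[of 0 1 "\<lambda>t. f (x + t *\<^sub>R d)" D] der by auto
  have pz: "\<And>i. 0 < pd i f (x + z *\<^sub>R d)" using incr inG z by auto
  have D0: "0 \<le> D z" unfolding D_def
    using pz d by (intro sum_nonneg) (simp add: less_imp_le)
  have D1: "0 < D z" if "0 < d $ i" for i unfolding D_def
    using pz d that by (intro sum_pos2[of UNIV i]) (auto simp: less_imp_le)
  have eq: "f (x + d) - f x = D z" using z by simp
  show ?thesis
  proof (intro conjI impI)
    show "f x \<le> f (x + d)" using eq D0 by simp
    assume "\<exists>i. 0 < d $ i"
    then obtain i where "0 < d $ i" by blast
    then show "f x < f (x + d)" using eq D1 by fastforce
  qed
qed


lemma dist_ee: "dist (s *\<^sub>R ee + v) (t *\<^sub>R ee + v) = \<bar>s - t\<bar>"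
proof -
  have "s *\<^sub>R ee + v - (t *\<^sub>R ee + v) = (s - t) *\<^sub>R ee" by (simp add: algebra_simps)
  then show ?thesis by (simp add: dist_norm norm_ee)
qed

lemma pt_comp: "(s *\<^sub>R ee + w *\<^sub>R bb a) $ i = (if i = first_idx then s else w * a $ i)"
  by (simp add: ee_def bb_def axis_def)

lemma seg_in:
  assumes "s1 *\<^sub>R ee + v \<in> \<Gamma>" "s2 *\<^sub>R ee + v \<in> \<Gamma>" "s1 \<le> t" "t \<le> s2"
  shows "t *\<^sub>R ee + v \<in> \<Gamma>"
proof (cases "s1 = s2")
  case True then show ?thesis using assms by auto
next
  case False
  then have lt: "s1 < s2" using assms by auto
  define u where "u = (s2 - t) / (s2 - s1)"
  have u: "0 \<le> u" "u \<le> 1" using assms lt by (auto simp: u_def field_simps)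
  have "u *\<^sub>R (s1 *\<^sub>R ee + v) + (1 - u) *\<^sub>R (s2 *\<^sub>R ee + v) \<in> \<Gamma>"
    using convexD[OF cvx assms(1,2), of u "1 - u"] u by auto
  moreover have "u *\<^sub>R (s1 *\<^sub>R ee + v) + (1 - u) *\<^sub>R (s2 *\<^sub>R ee + v) = t *\<^sub>R ee + v"
  proof -
    have "u * (s2 - s1) = s2 - t" using lt by (simp add: u_def)
    then have h: "u * s2 - u * s1 = s2 - t" by (simp add: algebra_simps)
    have "u * s1 + (1 - u) * s2 = s2 - (u * s2 - u * s1)" by (simp add: algebra_simps)
    then have "u * s1 + (1 - u) * s2 = t" using h by simp
    have "u *\<^sub>R (s1 *\<^sub>R ee + v) + (1 - u) *\<^sub>R (s2 *\<^sub>R ee + v) = (u * s1 + (1 - u) * s2) *\<^sub>R ee + v"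
      by (simp add: algebra_simps)
    then show ?thesis using \<open>u * s1 + (1 - u) * s2 = t\<close> by simp
  qed
  ultimately show ?thesis by simp
qed

lemma f_strict_s:
  assumes "s1 *\<^sub>R ee + v \<in> \<Gamma>" "s2 *\<^sub>R ee + v \<in> \<Gamma>" "s1 < s2"
  shows "f (s1 *\<^sub>R ee + v) < f (s2 *\<^sub>R ee + v)"
proof -
  have eq: "s2 *\<^sub>R ee + v = (s1 *\<^sub>R ee + v) + (s2 - s1) *\<^sub>R ee" by (simp add: algebra_simps)
  have "f (s1 *\<^sub>R ee + v) < f ((s1 *\<^sub>R ee + v) + (s2 - s1) *\<^sub>R ee)"
    using f_mono_gen[OF assms(1), of "(s2 - s1) *\<^sub>R ee"] assms eq
    by (auto simp: ee_comp intro: exI[of _ first_idx])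
  then show ?thesis by (subst eq)
qed

lemma exists_sol:
  assumes w: "1 \<le> w"
  shows "\<exists>s. s *\<^sub>R ee + w *\<^sub>R bb a \<in> \<Gamma> \<and> f (s *\<^sub>R ee + w *\<^sub>R bb a) = 1"
proof -
  let ?p = "\<lambda>s. s *\<^sub>R ee + w *\<^sub>R bb a"
  define a1 where "a1 = a $ first_idx"
  define L where "L = {s. ?p s \<in> \<Gamma>}"
  have ainG: "a \<in> \<Gamma>" using pos apos by auto
  have p1: "?p a1 \<in> \<Gamma>"
  proof (rule pos[THEN subsetD], safe)
    fix i show "0 < ?p a1 $ i" using apos[of i] apos[of first_idx] w unfolding pt_comp by (simp add: a1_def)
  qed
  have f1: "1 \<le> f (?p a1)"
  proof -
    have eq: "?p a1 = a + (w - 1) *\<^sub>R bb a"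
      by (subst (2) a_eq) (simp add: a1_def algebra_simps)
    have "f a \<le> f (a + (w - 1) *\<^sub>R bb a)"
      using f_mono_gen[OF ainG, of "(w - 1) *\<^sub>R bb a"] p1 eq w apos
      by (auto simp: bb_def less_imp_le)
    then show ?thesis using fa eq by simp
  qed
  have openL: "open L" unfolding L_def
    using open_vimage[OF op, of ?p] by (simp add: vimage_def continuous_intros)
  define M where "M = (\<Sum>i\<in>UNIV. w * bb a $ i)"
  have lb: "- M < s" if "s \<in> L" for s
  proof -
    have "0 < (\<Sum>i\<in>UNIV. ?p s $ i)" using half that L_def by auto
    also have "(\<Sum>i\<in>UNIV. ?p s $ i) = (\<Sum>i::'n\<in>UNIV. s * ee $ i) + M"
      by (simp add: M_def sum.distrib)
    also have "(\<Sum>i::'n\<in>UNIV. s * ee $ i) = s"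
      by (simp add: ee_comp if_distrib cong: if_cong)
    finally show ?thesis by simp
  qed
  have ne: "L \<noteq> {}" and a1L: "a1 \<in> L" using p1 L_def by auto
  have bdd: "bdd_below L" using lb by (auto intro!: bdd_belowI[of _ "- M"] less_imp_le)
  define s0 where "s0 = Inf L"
  have s0_le: "s0 \<le> s" if "s \<in> L" for s using cInf_lower[OF that bdd] s0_def by simp
  have s0_notin: "s0 \<notin> L"
  proof
    assume "s0 \<in> L"
    then obtain r where r: "r > 0" "ball s0 r \<subseteq> L" using openL open_contains_ball by blast
    then have "s0 - r / 2 \<in> L" by (auto simp: dist_real_def)
    then show False using s0_le[of "s0 - r / 2"] r by simp
  qed
  have approx: "\<exists>s\<in>L. s < s0 + \<epsilon>" if "\<epsilon> > 0" for \<epsilon>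
    using cInf_less_iff[OF ne bdd, of "s0 + \<epsilon>"] that s0_def by simp
  have fr: "?p s0 \<in> frontier \<Gamma>"
  proof -
    have "?p s0 \<in> closure \<Gamma>"
      unfolding closure_approachable
    proof (intro allI impI)
      fix \<epsilon> :: real assume "\<epsilon> > 0"
      then obtain s where s: "s \<in> L" "s < s0 + \<epsilon>" using approx by blast
      then show "\<exists>y\<in>\<Gamma>. dist y (?p s0) < \<epsilon>"
        using s0_le[OF s(1)] by (intro bexI[of _ "?p s"]) (auto simp: dist_ee L_def norm_ee)
    qed
    moreover have "?p s0 \<notin> interior \<Gamma>" using s0_notin interior_open[OF op] L_def by auto
    ultimately show ?thesis by (simp add: frontier_def)
  qed
  have "\<forall>\<^sub>F x in at (?p s0) within \<Gamma>. ereal (f x) < 1"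
    using Limsup_lessD[OF bdry[OF fr]] .
  then obtain d where d: "d > 0" "\<And>x. x \<in> \<Gamma> \<Longrightarrow> x \<noteq> ?p s0 \<Longrightarrow> dist x (?p s0) < d \<Longrightarrow> f x < 1"
    unfolding eventually_at by auto
  obtain s where s: "s \<in> L" "s < s0 + d" using approx d by blast
  have "s \<noteq> s0" using s s0_notin by auto
  then have ps: "?p s \<noteq> ?p s0"
    using dist_ee[of s "w *\<^sub>R bb a" s0] by auto
  have fs: "f (?p s) < 1"
    using d(2)[of "?p s"] s s0_le[OF s(1)] ps by (auto simp: L_def dist_ee norm_ee)
  have sa: "s < a1"
  proof (rule ccontr)
    assume "\<not> s < a1"
    then have "a1 \<le> s" by simp
    then have "f (?p a1) \<le> f (?p s)"
      using f_strict_s[of a1 "w *\<^sub>R bb a" s] p1 s(1) L_def by (cases "a1 = s") auto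
    then show False using f1 fs by simp
  qed
  have cont: "continuous_on {s..a1} (\<lambda>t. f (?p t))"
  proof (rule continuous_on_compose2[OF f_cont])
    show "continuous_on {s..a1} ?p" by (intro continuous_intros)
    show "?p ` {s..a1} \<subseteq> \<Gamma>"
      using seg_in[of s "w *\<^sub>R bb a" a1] s(1) p1 L_def by auto
  qed
  obtain t where t: "s \<le> t" "t \<le> a1" "f (?p t) = 1"
    using IVT'[of "\<lambda>t. f (?p t)" s 1 a1, OF _ _ _ cont] fs f1 sa by auto
  have "?p t \<in> \<Gamma>" using seg_in[of s "w *\<^sub>R bb a" a1 t] s(1) p1 L_def t by auto
  then show ?thesis using t by blast
qed


lemma f_mono_s:
  assumes "s1 *\<^sub>R ee + v \<in> \<Gamma>" "s2 *\<^sub>R ee + v \<in> \<Gamma>" "s1 \<le> s2"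
  shows "f (s1 *\<^sub>R ee + v) \<le> f (s2 *\<^sub>R ee + v)"
  using f_strict_s[OF assms(1,2)] assms(3) by (cases "s1 = s2") auto

lemma uniq_sol:
  assumes "s1 *\<^sub>R ee + v \<in> \<Gamma>" "f (s1 *\<^sub>R ee + v) = 1"
    "s2 *\<^sub>R ee + v \<in> \<Gamma>" "f (s2 *\<^sub>R ee + v) = 1"
  shows "s1 = s2"
  using f_strict_s[of s1 v s2] f_strict_s[of s2 v s1] assms
  by (cases s1 s2 rule: linorder_cases) auto

abbreviation "g \<equiv> gsol \<Gamma> f a"

lemma g_prop:
  assumes "1 \<le> w"
  shows "g w *\<^sub>R ee + w *\<^sub>R bb a \<in> \<Gamma> \<and> f (g w *\<^sub>R ee + w *\<^sub>R bb a) = 1"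
proof -
  obtain s where s: "s *\<^sub>R ee + w *\<^sub>R bb a \<in> \<Gamma>" "f (s *\<^sub>R ee + w *\<^sub>R bb a) = 1"
    using exists_sol[OF assms] by blast
  have "\<exists>!s. s *\<^sub>R ee + w *\<^sub>R bb a \<in> \<Gamma> \<and> f (s *\<^sub>R ee + w *\<^sub>R bb a) = 1"
    using s uniq_sol by blast
  then show ?thesis unfolding gsol_def by (rule theI')
qed

lemma g_antimono:
  assumes w: "1 \<le> w" "w \<le> w'"
  shows "g w' \<le> g w"
proof (rule ccontr)
  assume "\<not> g w' \<le> g w"
  then have lt: "g w < g w'" by simp
  let ?x = "g w *\<^sub>R ee + w *\<^sub>R bb a"
  let ?y = "g w' *\<^sub>R ee + w' *\<^sub>R bb a"
  have x: "?x \<in> \<Gamma>" "f ?x = 1" using g_prop w by auto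
  have y: "?y \<in> \<Gamma>" "f ?y = 1" using g_prop w by auto
  have eq: "?y = ?x + (?y - ?x)" by simp
  have "f ?x < f (?x + (?y - ?x))"
  proof (rule f_mono_gen[OF x(1), THEN conjunct2, rule_format])
    show "?x + (?y - ?x) \<in> \<Gamma>" using y by simp
    show "0 \<le> (?y - ?x) $ i" for i
      using lt w apos[of i] unfolding vector_minus_component pt_comp
      by (auto simp: algebra_simps intro!: mult_right_mono)
    show "\<exists>i. 0 < (?y - ?x) $ i"
      using lt unfolding vector_minus_component pt_comp by (intro exI[of _ first_idx]) simp
  qed
  then show False using x y by simp
qed

lemma g_cont:
  assumes w: "1 \<le> w" and e: "\<epsilon> > 0"
  shows "\<exists>\<delta>>0. \<forall>w'. 1 \<le> w' \<longrightarrow> \<bar>w' - w\<bar> < \<delta> \<longrightarrow> \<bar>g w' - g w\<bar> < \<epsilon>"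
proof -
  let ?p = "\<lambda>s w. s *\<^sub>R ee + w *\<^sub>R bb a"
  define s where "s = g w"
  have p0: "?p s w \<in> \<Gamma>" "f (?p s w) = 1" using g_prop[OF w] s_def by auto
  obtain r where r: "r > 0" "ball (?p s w) r \<subseteq> \<Gamma>" using op p0 open_contains_ball by blast
  define e' where "e' = min \<epsilon> (r / 2)"
  have e': "0 < e'" "e' \<le> \<epsilon>" "e' < r" using e r by (auto simp: e'_def)
  have qm: "?p (s - e') w \<in> \<Gamma>"
    by (rule subsetD[OF r(2)]) (use e' in \<open>simp add: dist_ee norm_ee\<close>)
  have qp: "?p (s + e') w \<in> \<Gamma>"
    by (rule subsetD[OF r(2)]) (use e' in \<open>simp add: dist_ee norm_ee\<close>)
  have fqm: "f (?p (s - e') w) < 1" using f_strict_s[OF qm p0(1)] e' p0 by simp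
  have fqp: "1 < f (?p (s + e') w)" using f_strict_s[OF p0(1) qp] e' p0 by simp
  have ev: "\<forall>\<^sub>F w' in at w. ?p (s + c) w' \<in> \<Gamma> \<and> ((f (?p (s + c) w') - 1) * c > 0)"
    if c: "c = e' \<or> c = - e'" for c
  proof -
    have inG: "?p (s + c) w \<in> \<Gamma>" using c qm qp by auto
    have cont: "isCont (\<lambda>w'. ?p (s + c) w') w" by (intro continuous_intros)
    have fc: "isCont f (?p (s + c) w)"
      using f_cont op inG continuous_on_eq_continuous_at by blast
    have t1: "((\<lambda>w'. ?p (s + c) w') \<longlongrightarrow> ?p (s + c) w) (at w)"
      using cont by (simp add: isCont_def)
    have e1: "\<forall>\<^sub>F w' in at w. ?p (s + c) w' \<in> \<Gamma>"
      using topological_tendstoD[OF t1 op inG] .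
    have t2: "((\<lambda>w'. (f (?p (s + c) w') - 1) * c) \<longlongrightarrow> (f (?p (s + c) w) - 1) * c) (at w)"
      using isCont_o2[OF cont fc] by (intro tendsto_intros) (simp add: isCont_def o_def)
    have pos: "(f (?p (s + c) w) - 1) * c > 0"
      using c fqm fqp e' by (auto simp: mult_pos_pos mult_neg_neg mult_less_0_iff)
    have e2: "\<forall>\<^sub>F w' in at w. (f (?p (s + c) w') - 1) * c > 0"
      using order_tendstoD(1)[OF t2 pos] .
    show ?thesis using e1 e2 by eventually_elim auto
  qed
  have "\<forall>\<^sub>F w' in at w. (?p (s + e') w' \<in> \<Gamma> \<and> ((f (?p (s + e') w') - 1) * e' > 0)) \<and>
      (?p (s + - e') w' \<in> \<Gamma> \<and> ((f (?p (s + - e') w') - 1) * - e' > 0))"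
    using eventually_conj[OF ev[of e'] ev[of "- e'"]] by simp
  then obtain d where d: "d > 0" and dP: "\<And>w'. w' \<noteq> w \<Longrightarrow> dist w' w < d \<Longrightarrow>
      (?p (s + e') w' \<in> \<Gamma> \<and> ((f (?p (s + e') w') - 1) * e' > 0)) \<and>
      (?p (s + - e') w' \<in> \<Gamma> \<and> ((f (?p (s + - e') w') - 1) * - e' > 0))"
    unfolding eventually_at by auto
  show ?thesis
  proof (intro exI[of _ d] conjI allI impI d)
    fix w' assume w': "1 \<le> w'" "\<bar>w' - w\<bar> < d"
    show "\<bar>g w' - g w\<bar> < \<epsilon>"
    proof (cases "w' = w")
      case True then show ?thesis using e by simp
    next
      case False
      have P: "?p (s + e') w' \<in> \<Gamma>" "f (?p (s + e') w') > 1"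
        "?p (s - e') w' \<in> \<Gamma>" "f (?p (s - e') w') < 1"
        using dP[OF False] w' e' by (auto simp: dist_real_def zero_less_mult_iff mult_less_0_iff)
      have gw': "?p (g w') w' \<in> \<Gamma>" "f (?p (g w') w') = 1" using g_prop[OF w'(1)] by auto
      have "g w' < s + e'"
      proof (rule ccontr)
        assume "\<not> g w' < s + e'"
        then have "f (?p (s + e') w') \<le> f (?p (g w') w')" using f_mono_s[OF P(1) gw'(1)] by simp
        then show False using P gw' by simp
      qed
      moreover have "s - e' < g w'"
      proof (rule ccontr)
        assume "\<not> s - e' < g w'"
        then have "f (?p (g w') w') \<le> f (?p (s - e') w')" using f_mono_s[OF gw'(1) P(3)] by simp
        then show False using P gw' by simp
      qed
      ultimately show ?thesis using e' s_def by auto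
    qed
  qed
qed


abbreviation "U \<equiv> {z. fst z *\<^sub>R ee + snd z *\<^sub>R bb a \<in> \<Gamma>}"

lemma Fs_pos: "z \<in> U \<Longrightarrow> FsF f a z > 0"
  using incr[of _ first_idx] by (simp add: FsF_def sum_ee cmp_def)

lemma F_deriv: "z \<in> U \<Longrightarrow> (cmp ee (bb a) f has_derivative (\<lambda>h. FsF f a z * fst h + FwF f a z * snd h)) (at z)"
  using cmp_deriv[OF smv_f, of z ee "bb a"] by (simp add: FsF_def FwF_def)

lemma g_deriv:
  assumes w: "1 \<le> w"
  shows "(g has_real_derivative - (FwF f a (g w, w) / FsF f a (g w, w))) (at w within {1..})"
proof -
  define z0 where "z0 = (g w, w)"
  define A where "A = FsF f a z0"
  define C where "C = FwF f a z0"
  have z0U: "z0 \<in> U" using g_prop[OF w] z0_def by simp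
  have A: "A > 0" using Fs_pos[OF z0U] A_def by simp
  have Fd: "(cmp ee (bb a) f has_derivative (\<lambda>h. A * fst h + C * snd h)) (at z0)"
    using F_deriv[OF z0U] A_def C_def by simp
  have Fval: "cmp ee (bb a) f (g y, y) = 1" if "1 \<le> y" for y
    using g_prop[OF that] by (simp add: cmp_def)
  show ?thesis
    unfolding has_field_derivative_def has_derivative_within_alt
  proof (intro conjI allI impI)
    show "bounded_linear ((*) (- (FwF f a (g w, w) / FsF f a (g w, w))))"
      by (rule bounded_linear_mult_right)
  next
    fix \<eta> :: real assume eta: "\<eta> > 0"
    define K where "K = (2 * \<bar>C\<bar> + A) / A"
    have K0: "K \<ge> 0" using A by (simp add: K_def)
    define \<epsilon> where "\<epsilon> = min (A / 2) (\<eta> * A / (K + 1))"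
    have e: "\<epsilon> > 0" using A eta K0 by (simp add: \<epsilon>_def)
    obtain d1 where d1: "d1 > 0" "\<And>y. norm (y - z0) < d1 \<Longrightarrow>
        norm (cmp ee (bb a) f y - cmp ee (bb a) f z0 - (A * fst (y - z0) + C * snd (y - z0))) \<le> \<epsilon> * norm (y - z0)"
      using Fd[unfolded has_derivative_at_alt] e by blast
    obtain \<delta> where \<delta>: "\<delta> > 0" "\<And>w'. 1 \<le> w' \<Longrightarrow> \<bar>w' - w\<bar> < \<delta> \<Longrightarrow> \<bar>g w' - g w\<bar> < d1 / 2"
      using g_cont[OF w, of "d1 / 2"] d1 by auto
    show "\<exists>d>0. \<forall>y\<in>{1..}. norm (y - w) < d \<longrightarrow>
        norm (g y - g w - - (FwF f a (g w, w) / FsF f a (g w, w)) * (y - w)) \<le> \<eta> * norm (y - w)"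
    proof (intro exI[of _ "min \<delta> (d1 / 2)"] conjI ballI impI)
      show "0 < min \<delta> (d1 / 2)" using \<delta> d1 by simp
      fix y :: real assume y: "y \<in> {1..}" "norm (y - w) < min \<delta> (d1 / 2)"
      define ds where "ds = g y - g w"
      define dw where "dw = y - w"
      have dsb: "\<bar>ds\<bar> < d1 / 2" using \<delta>(2)[of y] y by (simp add: ds_def)
      have dwb: "\<bar>dw\<bar> < d1 / 2" using y by (simp add: dw_def)
      have yz: "(g y, y) - z0 = (ds, dw)" by (simp add: z0_def ds_def dw_def)
      define N where "N = norm (ds, dw)"
      have N: "N \<le> \<bar>ds\<bar> + \<bar>dw\<bar>"
        unfolding N_def norm_Pair using sqrt_sum_squares_le_sum_abs[of ds dw] by simp
      have "N < d1" using N dsb dwb by linarith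
      then have "norm (cmp ee (bb a) f (g y, y) - cmp ee (bb a) f z0 - (A * ds + C * dw)) \<le> \<epsilon> * N"
        using d1(2)[of "(g y, y)"] yz N_def by simp
      moreover have "cmp ee (bb a) f z0 = 1" using Fval[OF w] z0_def by simp
      moreover have "cmp ee (bb a) f (g y, y) = 1" using Fval y by simp
      ultimately have F: "\<bar>A * ds + C * dw\<bar> \<le> \<epsilon> * N" by simp
      have "\<bar>ds + (C / A) * dw\<bar> \<le> \<eta> * \<bar>dw\<bar>"
        by (rule implicit_arith[OF A eta N _ F _ _ K_def]) (use e in \<open>auto simp: \<epsilon>_def min_def\<close>)
      then show "norm (g y - g w - - (FwF f a (g w, w) / FsF f a (g w, w)) * (y - w)) \<le> \<eta> * norm (y - w)"
        by (simp add: ds_def dw_def A_def C_def z0_def)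
    qed
  qed
qed


lemma sm_cmp_pd: "sm U (cmp ee (bb a) (pd i f))"
proof -
  have "smv \<Gamma> (pd i f)" using smv_f by (cases rule: smv.cases) auto
  then show ?thesis by (rule cmp_sm)
qed

lemma alg_Fs: "alg U (Collect (sm U)) (FsF f a)"
proof -
  have "alg U (Collect (sm U)) (\<lambda>z. \<Sum>i\<in>UNIV. ee $ i * cmp ee (bb a) (pd i f) z)"
    by (intro alg_sum alg.mult alg.const alg.base) (auto intro: sm_cmp_pd)
  moreover have "FsF f a = (\<lambda>z. \<Sum>i\<in>UNIV. ee $ i * cmp ee (bb a) (pd i f) z)"
    by (rule ext) (simp add: FsF_def)
  ultimately show ?thesis by simp
qed

lemma alg_Fw: "alg U (Collect (sm U)) (FwF f a)"
proof -
  have "alg U (Collect (sm U)) (\<lambda>z. \<Sum>i\<in>UNIV. bb a $ i * cmp ee (bb a) (pd i f) z)"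
    by (intro alg_sum alg.mult alg.const alg.base) (auto intro: sm_cmp_pd)
  moreover have "FwF f a = (\<lambda>z. \<Sum>i\<in>UNIV. bb a $ i * cmp ee (bb a) (pd i f) z)"
    by (rule ext) (simp add: FwF_def)
  ultimately show ?thesis by simp
qed

lemma sm_step:
  assumes "sm U \<Phi>"
  shows "\<exists>\<Psi>. sm U \<Psi> \<and> (\<forall>w\<in>{1..}. ((\<lambda>w. \<Phi> (g w, w)) has_real_derivative \<Psi> (g w, w)) (at w within {1..}))"
  using assms
proof (cases rule: sm.cases)
  case (1 \<Phi>s \<Phi>w)
  define \<Psi> where "\<Psi> = (\<lambda>z. \<Phi>s z * (- 1 * (FwF f a z * inverse (FsF f a z))) + \<Phi>w z)"
  have "alg U (Collect (sm U)) \<Psi>"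
    unfolding \<Psi>_def
  proof (intro alg.add alg.mult alg.const alg.inv alg_Fw alg_Fs)
    show "alg U (Collect (sm U)) \<Phi>s" using 1 by (auto intro: alg.base)
    show "alg U (Collect (sm U)) \<Phi>w" using 1 by (auto intro: alg.base)
    show "\<forall>z\<in>U. FsF f a z \<noteq> 0" using Fs_pos by (auto simp: less_imp_neq[symmetric])
  qed
  then have smP: "sm U \<Psi>" by (rule alg_sm_self)
  have "((\<lambda>w. \<Phi> (g w, w)) has_real_derivative \<Psi> (g w, w)) (at w within {1..})" if w: "w \<in> {1..}" for w
  proof -
    define G' where "G' = - (FwF f a (g w, w) / FsF f a (g w, w))"
    have gd: "(g has_derivative (*) G') (at w within {1..})"
      using g_deriv[of w] w unfolding has_field_derivative_def G'_def by auto
    have inner: "((\<lambda>w. (g w, w)) has_derivative (\<lambda>h. (G' * h, h))) (at w within {1..})"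
      by (rule has_derivative_Pair[OF gd has_derivative_ident])
    have zU: "(g w, w) \<in> U" using g_prop[of w] w by simp
    have outer: "(\<Phi> has_derivative (\<lambda>h. \<Phi>s (g w, w) * fst h + \<Phi>w (g w, w) * snd h)) (at (g w, w))"
      using 1 zU by blast
    show ?thesis
      unfolding has_field_derivative_def
      by (rule has_derivative_eq_rhs[OF has_derivative_compose[OF inner outer]])
        (simp add: fun_eq_iff \<Psi>_def G'_def divide_inverse algebra_simps)
  qed
  then show ?thesis using smP by blast
qed

lemma sm_fst: "sm U fst"
proof (rule alg_sm[of "{fst}"])
  show "alg U {fst} fst" by (auto intro: alg.base)
next
  fix \<Phi> :: "real \<times> real \<Rightarrow> real" assume "\<Phi> \<in> {fst}"
  then have P: "\<Phi> = fst" by simp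
  have "(\<Phi> has_derivative (\<lambda>h. (\<lambda>z. 1) z * fst h + (\<lambda>z. 0) z * snd h)) (at z)" for z
    unfolding P by (rule has_derivative_eq_rhs[OF has_derivative_fst[OF has_derivative_ident]]) (simp add: fun_eq_iff)
  then show "\<exists>\<Phi>s \<Phi>w. alg U {fst} \<Phi>s \<and> alg U {fst} \<Phi>w \<and>
              (\<forall>z\<in>U. (\<Phi> has_derivative (\<lambda>h. \<Phi>s z * fst h + \<Phi>w z * snd h)) (at z))"
    by (intro exI[of _ "\<lambda>z. 1"] exI[of _ "\<lambda>z. 0"] conjI alg.const) auto
qed

lemma g_smooth: "smooth_on_real {1..} g"
proof -
  let ?Q = "\<lambda>\<Phi> \<Psi>. sm U \<Phi> \<longrightarrow> sm U \<Psi> \<and>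
      (\<forall>w\<in>{1..}. ((\<lambda>w. \<Phi> (g w, w)) has_real_derivative \<Psi> (g w, w)) (at w within {1..}))"
  have "\<forall>\<Phi>. \<exists>\<Psi>. ?Q \<Phi> \<Psi>"
  proof
    fix \<Phi> show "\<exists>\<Psi>. ?Q \<Phi> \<Psi>"
    proof (cases "sm U \<Phi>")
      case True then show ?thesis using sm_step[OF True] by blast
    qed simp
  qed
  then have "\<exists>st. \<forall>\<Phi>. ?Q \<Phi> (st \<Phi>)" by (rule choice)
  then obtain st where st: "\<forall>\<Phi>. ?Q \<Phi> (st \<Phi>)" by blast
  define P where "P k = (st ^^ k) fst" for k
  have PS: "P (Suc k) = st (P k)" for k by (simp add: P_def)
  have smP: "sm U (P k)" for k
  proof (induction k)
    case 0 then show ?case using sm_fst by (simp add: P_def)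
  next
    case (Suc k)
    have "sm U (st (P k))" using st Suc by blast
    then show ?case unfolding PS .
  qed
  show ?thesis unfolding smooth_on_real_def
  proof (intro exI[of _ "\<lambda>k w. P k (g w, w)"] conjI allI ballI)
    show "(\<lambda>w. P 0 (g w, w)) = g" by (simp add: P_def)
    fix k and x :: real assume x: "x \<in> {1..}"
    have "\<forall>w\<in>{1..}. ((\<lambda>w. P k (g w, w)) has_real_derivative st (P k) (g w, w)) (at w within {1..})"
      using st smP[of k] by blast
    then show "((\<lambda>w. P k (g w, w)) has_real_derivative P (Suc k) (g x, x)) (at x within {1..})"
      unfolding PS using x by blast
  qed
qed

end

theorem lemma2p3:
  fixes \<Gamma> :: "(real,'n::{finite,wellorder}) vec set"
    and f :: "(real,'n) vec \<Rightarrow> real"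
    and a :: "(real,'n) vec"
  assumes cone_open: "open \<Gamma>" and cone_convex: "convex \<Gamma>"
    and cone_proper: "\<Gamma> \<noteq> UNIV"
    and cone: "\<And>x t. x \<in> \<Gamma> \<Longrightarrow> 0 < t \<Longrightarrow> t *\<^sub>R x \<in> \<Gamma>"
    and pos_sub: "{x. \<forall>i. 0 < x $ i} \<subseteq> \<Gamma>"
    and sub_halfspace: "\<Gamma> \<subseteq> {x. 0 < (\<Sum>i\<in>UNIV. x $ i)}"
    and f_smooth: "smooth_on_vec \<Gamma> f"
    and f_symm: "\<And>p x. p permutes (UNIV :: 'n set) \<Longrightarrow> x \<in> \<Gamma> \<Longrightarrow>
                    (\<chi> i. x $ p i) \<in> \<Gamma> \<and> f (\<chi> i. x $ p i) = f x"
    and f_incr: "\<And>i x. x \<in> \<Gamma> \<Longrightarrow> 0 < pd i f x"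
    and f_bdry: "\<And>l. l \<in> frontier \<Gamma> \<Longrightarrow> Limsup (at l within \<Gamma>) (\<lambda>x. ereal (f x)) < 1"
    and a_A: "in_class_A f a"
    and a_pos: "\<And>i. 0 < a $ i"
    and a_sorted: "\<And>i j. i \<le> j \<Longrightarrow> a $ i \<le> a $ j"
  shows "\<exists>g. (antimono_on {1..} g \<and> smooth_on_real {1..} g \<and>
              (\<forall>w\<ge>1. curve_pt g a w \<in> \<Gamma> \<and> f (curve_pt g a w) = 1)) \<and>
            (\<forall>h. antimono_on {1..} h \<and> smooth_on_real {1..} h \<and>
              (\<forall>w\<ge>1. curve_pt h a w \<in> \<Gamma> \<and> f (curve_pt h a w) = 1)
              \<longrightarrow> (\<forall>w\<ge>1. h w = g w))"
proof -
  have fa: "f a = 1" using a_A by (simp add: in_class_A_def)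
  interpret L: L23 \<Gamma> f a
    using cone_open cone_convex pos_sub sub_halfspace f_smooth f_incr f_bdry fa a_pos
    by unfold_locales auto
  let ?g = "gsol \<Gamma> f a"
  have P: "\<forall>w\<ge>1. curve_pt ?g a w \<in> \<Gamma> \<and> f (curve_pt ?g a w) = 1"
    using L.g_prop by (simp add: curve_eq)
  have M: "antimono_on {1..} ?g"
    by (rule monotone_onI) (use L.g_antimono in auto)
  have U: "\<forall>h. antimono_on {1..} h \<and> smooth_on_real {1..} h \<and>
              (\<forall>w\<ge>1. curve_pt h a w \<in> \<Gamma> \<and> f (curve_pt h a w) = 1)
              \<longrightarrow> (\<forall>w\<ge>1. h w = ?g w)"
  proof (intro allI impI)
    fix h :: "real \<Rightarrow> real" and w :: real
    assume h: "antimono_on {1..} h \<and> smooth_on_real {1..} h \<and>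
              (\<forall>w\<ge>1. curve_pt h a w \<in> \<Gamma> \<and> f (curve_pt h a w) = 1)" and w: "1 \<le> w"
    have "h w *\<^sub>R ee + w *\<^sub>R bb a \<in> \<Gamma> \<and> f (h w *\<^sub>R ee + w *\<^sub>R bb a) = 1"
      using h w by (simp add: curve_eq)
    then show "h w = ?g w" using L.g_prop[OF w] L.uniq_sol by blast
  qed
  show ?thesis using M L.g_smooth P U by blast
qed

end
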